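(* Let $X=Y=\{x\in\mathbb{R}^3:x_3=0\}$ both carry a compactly supported probability measure $\mu$ with $d\mu(x_1,x_2,0)=h(x_1,x_2)\,d\mathcal{L}_2(x_1,x_2)$ for some nonnegative integrable $h$, and let $Z=\{z\in\mathbb{R}^3:|z|=1\}$ carry $d\gamma=\alpha\,dS$ where $dS$ is the surface measure and $\alpha$ is a positive continuous function with $\alpha(z_1,z_2,z_3)=\alpha(z_1,z_2,-z_3)$ and $\int_Z\alpha\,dS=1$. Consider $\inf\{\int(|x-y|^2+|x-z|^2+|y-z|^2)\,d\lambda:\lambda\in\Pi(\mu,\mu,\gamma)\}$. Then (i) every optimal plan $\lambda$ satisfies $x=y$ for all $(x,y,z)\in\mathrm{Spt}(\lambda)$; and (ii) if this problem has an optimal plan of the form $(\mathrm{id}\times T\times G)\#\mu$ with measurable $T:X\to Y$, $G=(G_1,G_2,G_3):X\to Z$, then $T=\mathrm{id}$ $\mu$-a.e. and $(\mathrm{id}\times\mathrm{id}\times\tilde G)\#\mu$ with $\tilde G=(G_1,G_2,-G_3)$ is also an optimal plan; in particular, if $G_3\neq0$ on a set of positive $\mu$-measure, the optimal plan is not unique.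
   Context: $|\cdot|$ is the Euclidean norm on $\mathbb{R}^3$, $\mathcal{L}_2$ Lebesgue measure on $\mathbb{R}^2$. $\Pi(\mu,\mu,\gamma)$ is the set of Borel probability measures on $X\times Y\times Z$ with marginals $\mu,\mu,\gamma$; $\mathrm{Spt}$ denotes support; $(\mathrm{id}\times T\times G)\#\mu$ is the push-forward of $\mu$ under $x\mapsto(x,T(x),G(x))$. *)

theory Defs
  imports "HOL-Probability.Probability"
begin

type_synonym pt = "real \<times> real \<times> real"

definition Spt :: "'a::topological_space measure \<Rightarrow> 'a set" where
  "Spt M = {x. \<forall>U. open U \<and> x \<in> U \<longrightarrow> emeasure M U > 0}"

text \<open>Surface measure on the unit sphere of R^3, via the cone construction:
  S(A) = 3 * Lebesgue measure of {t a : a in A, 0 < t <= 1}, realised as push-forward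
  of 3 times Lebesgue measure on the unit ball under radial projection x / |x|.\<close>
definition surfS2 :: "pt measure" where
  "surfS2 = distr (density lborel (\<lambda>x. 3 * indicator (ball 0 1) x)) borel (\<lambda>x. x /\<^sub>R norm x)"

definition plans :: "pt measure \<Rightarrow> pt measure \<Rightarrow> pt measure \<Rightarrow> (pt \<times> pt \<times> pt) measure set" where
  "plans \<mu> \<nu> \<gamma> = {L. sets L = sets borel \<and> prob_space L \<and>
      distr L borel fst = \<mu> \<and> distr L borel (\<lambda>p. fst (snd p)) = \<nu> \<and>
      distr L borel (\<lambda>p. snd (snd p)) = \<gamma>}"

definition cost3 :: "pt \<times> pt \<times> pt \<Rightarrow> real" where
  "cost3 = (\<lambda>(x, y, z). (norm (x - y))\<^sup>2 + (norm (x - z))\<^sup>2 + (norm (y - z))\<^sup>2)"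

definition optimal_plan :: "pt measure \<Rightarrow> pt measure \<Rightarrow> pt measure \<Rightarrow> (pt \<times> pt \<times> pt) measure \<Rightarrow> bool" where
  "optimal_plan \<mu> \<nu> \<gamma> L \<longleftrightarrow> L \<in> plans \<mu> \<nu> \<gamma> \<and>
     (\<forall>L'\<in>plans \<mu> \<nu> \<gamma>. (\<integral>\<^sup>+p. ennreal (cost3 p) \<partial>L) \<le> (\<integral>\<^sup>+p. ennreal (cost3 p) \<partial>L'))"

end

theory Submission
  imports Defs
begin


lemma Spt_null:
  fixes M :: "'a::second_countable_topology measure"
  assumes sM: "sets M = sets borel"
  shows "- Spt M \<in> null_sets M"
proof -
  obtain B :: "'a set set" where B: "countable B" "topological_basis B"
    using ex_countable_basis by blast
  let ?N = "{b\<in>B. emeasure M b = 0}"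
  have opB: "\<And>b. b \<in> B \<Longrightarrow> open b" using B(2) topological_basis_open by blast
  have sub: "- Spt M \<subseteq> \<Union>?N"
  proof
    fix x assume "x \<in> - Spt M"
    then obtain U where U: "open U" "x \<in> U" "\<not> emeasure M U > 0" unfolding Spt_def by auto
    then have U0: "emeasure M U = 0" by (simp add: not_less)
    obtain b where b: "b \<in> B" "x \<in> b" "b \<subseteq> U" using B(2) U(1,2) topological_basisE by blast
    have "emeasure M b \<le> emeasure M U"
      by (rule emeasure_mono) (use b U opB sM in auto)
    with U0 b show "x \<in> \<Union>?N" by auto
  qed
  have "\<Union>?N \<in> null_sets M"
    using null_sets_UN'[of ?N "\<lambda>b. b" M] B(1) opB sM by (auto simp: null_sets_def)
  moreover have "- Spt M \<in> sets M"
  proof -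
    have "- Spt M = \<Union>{U. open U \<and> emeasure M U = 0}"
      unfolding Spt_def by (auto simp: not_less)
    then have "open (- Spt M)" by auto
    thus ?thesis using sM by simp
  qed
  ultimately show ?thesis using sub null_sets_subset by blast
qed


definition refl3 :: "pt \<Rightarrow> pt" where
  "refl3 z = (fst z, fst (snd z), - snd (snd z))"

lemma norm_pt_sq: "(norm (u::pt))\<^sup>2 = (fst u)\<^sup>2 + (fst (snd u))\<^sup>2 + (snd (snd u))\<^sup>2"
  by (cases u) (simp add: norm_Pair)

lemma norm_refl3_diff: "snd (snd x) = 0 \<Longrightarrow> norm (x - refl3 g) = norm (x - (g::pt))"
proof -
  assume "snd (snd x) = 0"
  then have "(norm (x - refl3 g))\<^sup>2 = (norm (x - g))\<^sup>2" by (simp add: norm_pt_sq refl3_def)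
  then show ?thesis by (simp add: power2_eq_iff_nonneg)
qed

lemma norm_refl3[simp]: "norm (refl3 z) = norm z"
proof -
  have "(norm (refl3 z))\<^sup>2 = (norm z)\<^sup>2" by (simp add: norm_pt_sq refl3_def)
  then show ?thesis by (simp add: power2_eq_iff_nonneg)
qed

lemma refl3_scaleR: "refl3 (c *\<^sub>R z) = c *\<^sub>R refl3 z"
  by (simp add: refl3_def)

lemma refl3_meas[measurable]: "refl3 \<in> borel_measurable borel"
  unfolding refl3_def by (intro borel_measurable_continuous_onI continuous_intros)

lemma lborel_refl2: "distr lborel borel (\<lambda>(x::real, y::real). (x, - y)) = lborel"
proof -
  have "(lborel :: (real\<times>real) measure) = lborel \<Otimes>\<^sub>M lborel" by (rule lborel_prod[symmetric])
  also have "\<dots> = distr lborel borel (\<lambda>x. x) \<Otimes>\<^sub>M distr lborel borel uminus"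
    by (simp add: lborel_distr_uminus distr_id2)
  also have "\<dots> = distr (lborel \<Otimes>\<^sub>M lborel) (borel \<Otimes>\<^sub>M borel) (\<lambda>(x, y). (x, - y))"
    by (rule pair_measure_distr) (auto simp: lborel_distr_uminus intro: lborel.sigma_finite_measure_axioms)
  also have "\<dots> = distr lborel borel (\<lambda>(x::real, y::real). (x, - y))"
    by (simp add: lborel_prod borel_prod)
  finally show ?thesis ..
qed

lemma lborel_refl3: "distr lborel borel refl3 = lborel"
proof -
  have s2: "sigma_finite_measure (distr lborel borel (\<lambda>(x::real, y::real). (x, - y)))"
    by (simp add: lborel_refl2 lborel.sigma_finite_measure_axioms)
  have "(lborel :: pt measure) = lborel \<Otimes>\<^sub>M lborel" by (rule lborel_prod[symmetric])
  also have "\<dots> = distr lborel borel (\<lambda>x. x) \<Otimes>\<^sub>M distr lborel borel (\<lambda>(x::real, y::real). (x, - y))"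
    by (simp add: lborel_refl2 distr_id2)
  also have "\<dots> = distr (lborel \<Otimes>\<^sub>M lborel) (borel \<Otimes>\<^sub>M borel) (\<lambda>(x, y). (x, (\<lambda>(x::real, y::real). (x, - y)) y))"
    apply (rule pair_measure_distr[OF _ _ s2])
     apply simp
    apply (simp add: case_prod_beta')
    apply (intro borel_measurable_continuous_onI continuous_intros)
    done
  also have "\<dots> = distr lborel borel refl3"
    apply (rule distr_cong)
      apply (simp add: lborel_prod)
     apply (rule arg_cong[where f=sets], rule borel_prod)
    apply (simp add: refl3_def split: prod.splits)
    done
  finally show ?thesis ..
qed

lemma distr_density_inv:
  fixes M :: "'a::topological_space measure" and R :: "'a \<Rightarrow> 'a"
  assumes sM: "sets M = sets borel" and R[measurable]: "R \<in> borel_measurable borel"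
    and MR: "distr M borel R = M" and g[measurable]: "g \<in> borel_measurable borel"
    and gR: "\<And>x. g (R x) = g x"
  shows "distr (density M g) borel R = density M g"
proof -
  note mM = measurable_cong_sets[OF sM refl]
  have spM: "space M = UNIV" using sets_eq_imp_space_eq[OF sM] by simp
  have RM: "R \<in> measurable M borel" and gM: "g \<in> borel_measurable M" by (auto simp: mM)
  show ?thesis
  proof (rule measure_eqI)
    show "sets (distr (density M g) borel R) = sets (density M g)" using sM by simp
    fix A assume "A \<in> sets (distr (density M g) borel R)"
    then have A: "A \<in> sets borel" by simp
    have RA: "R -` A \<in> sets M" using measurable_sets[OF RM A] spM by simp
    have "emeasure (distr (density M g) borel R) A = emeasure (density M g) (R -` A \<inter> space M)"
      by (subst emeasure_distr) (use RM A in auto)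
    also have "\<dots> = (\<integral>\<^sup>+x. g x * indicator (R -` A \<inter> space M) x \<partial>M)"
      by (rule emeasure_density) (use gM RA in \<open>auto simp: spM\<close>)
    also have "\<dots> = (\<integral>\<^sup>+x. (\<lambda>y. g y * indicator A y) (R x) \<partial>M)"
      by (intro nn_integral_cong) (simp add: gR spM indicator_def)
    also have "\<dots> = (\<integral>\<^sup>+y. g y * indicator A y \<partial>distr M borel R)"
      by (rule nn_integral_distr[symmetric]) (use RM A in auto)
    also have "\<dots> = emeasure (density M g) A"
      unfolding MR by (rule emeasure_density[symmetric]) (use gM A sM in auto)
    finally show "emeasure (distr (density M g) borel R) A = emeasure (density M g) A" .
  qed
qed

lemma surfS2_refl: "distr surfS2 borel refl3 = surfS2"
proof -
  define D :: "pt measure" where "D = density lborel (\<lambda>x. 3 * indicator (ball 0 1) x)"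
  have N[measurable]: "(\<lambda>x::pt. x /\<^sub>R norm x) \<in> borel_measurable borel" by measurable
  have sD: "sets D = sets borel" by (simp add: D_def)
  note mD = measurable_cong_sets[OF sD refl]
  have DR: "distr D borel refl3 = D"
    unfolding D_def
    by (rule distr_density_inv) (auto simp: lborel_refl3 indicator_def)
  have "distr surfS2 borel refl3 = distr D borel (refl3 \<circ> (\<lambda>x. x /\<^sub>R norm x))"
    unfolding surfS2_def D_def[symmetric] by (rule distr_distr) (auto simp: mD)
  also have "\<dots> = distr D borel ((\<lambda>x. x /\<^sub>R norm x) \<circ> refl3)"
    by (simp add: comp_def refl3_scaleR)
  also have "\<dots> = distr (distr D borel refl3) borel (\<lambda>x. x /\<^sub>R norm x)"
    by (rule distr_distr[symmetric]) (auto simp: mD)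
  also have "\<dots> = distr D borel (\<lambda>x. x /\<^sub>R norm x)" by (simp only: DR)
  also have "\<dots> = surfS2" by (simp add: surfS2_def D_def)
  finally show ?thesis .
qed


lemma bm_fst[measurable]: "(fst :: 'a::topological_space \<times> 'b::topological_space \<Rightarrow> 'a) \<in> borel_measurable borel"
  by (intro borel_measurable_continuous_onI continuous_intros)
lemma bm_snd[measurable]: "(snd :: 'a::topological_space \<times> 'b::topological_space \<Rightarrow> 'b) \<in> borel_measurable borel"
  by (intro borel_measurable_continuous_onI continuous_intros)

lemma ennreal_cancel_aux:
  fixes b d :: ennreal
  assumes h: "(b + d) + (b + d) \<le> d + d" and f: "d < \<infinity>"
  shows "b = 0"
proof -
  have "(d + d) + (b + b) \<le> (d + d) + 0" using h by (simp add: algebra_simps)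
  moreover have "d + d \<noteq> \<infinity>" using f by (simp add: ennreal_add_less_top)
  ultimately have "b + b \<le> 0" by (simp add: ennreal_add_left_cancel_le)
  then show ?thesis by simp
qed

lemma sq_le: "(norm (a - b::'a::real_normed_vector))\<^sup>2 \<le> 2 * (norm a)\<^sup>2 + 2 * (norm b)\<^sup>2"
proof -
  have "norm (a - b) \<le> norm a + norm b" by (rule norm_triangle_ineq4)
  then have "(norm (a - b))\<^sup>2 \<le> (norm a + norm b)\<^sup>2" by (simp add: power_mono)
  also have "\<dots> \<le> 2 * (norm a)\<^sup>2 + 2 * (norm b)\<^sup>2"
    using power2_diff[of "norm a" "norm b"] power2_sum[of "norm a" "norm b"] zero_le_power2[of "norm a - norm b"]
    by linarith
  finally show ?thesis .
qed

lemma opt_diag: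
  fixes \<mu> \<gamma> :: "pt measure"
  assumes opt: "optimal_plan \<mu> \<mu> \<gamma> L"
    and fmu: "(\<integral>\<^sup>+x. ennreal ((norm x)\<^sup>2) \<partial>\<mu>) < \<infinity>"
    and fga: "(\<integral>\<^sup>+z. ennreal ((norm z)\<^sup>2) \<partial>\<gamma>) < \<infinity>"
  shows "AE p in L. fst p = fst (snd p)"
proof -
  have Lp: "L \<in> plans \<mu> \<mu> \<gamma>" and optL: "\<And>L'. L' \<in> plans \<mu> \<mu> \<gamma> \<Longrightarrow>
      (\<integral>\<^sup>+p. ennreal (cost3 p) \<partial>L) \<le> (\<integral>\<^sup>+p. ennreal (cost3 p) \<partial>L')"
    using opt unfolding optimal_plan_def by auto
  have sL: "sets L = sets borel" and pL: "prob_space L" and m1: "distr L borel fst = \<mu>"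
    and m2: "distr L borel (\<lambda>p. fst (snd p)) = \<mu>" and m3: "distr L borel (\<lambda>p. snd (snd p)) = \<gamma>"
    using Lp unfolding plans_def by auto
  note mL = measurable_cong_sets[OF sL refl]
  define B where "B = (\<lambda>p :: pt \<times> pt \<times> pt. (norm (fst p - fst (snd p)))\<^sup>2)"
  define a where "a = (\<lambda>p :: pt \<times> pt \<times> pt. (norm (fst p - snd (snd p)))\<^sup>2)"
  define c where "c = (\<lambda>p :: pt \<times> pt \<times> pt. (norm (fst (snd p) - snd (snd p)))\<^sup>2)"
  have [measurable]: "B \<in> borel_measurable borel" "a \<in> borel_measurable borel" "c \<in> borel_measurable borel"
    unfolding B_def a_def c_def by (intro borel_measurable_continuous_onI continuous_intros)+
  have [measurable]: "cost3 \<in> borel_measurable borel" unfolding cost3_def by measurable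
  have cost: "cost3 p = B p + (a p + c p)" for p
    by (cases p) (auto simp: cost3_def B_def a_def c_def)
  define f1 where "f1 = (\<lambda>p :: pt \<times> pt \<times> pt. (fst p, fst p, snd (snd p)))"
  define f2 where "f2 = (\<lambda>p :: pt \<times> pt \<times> pt. (fst (snd p), fst (snd p), snd (snd p)))"
  have [measurable]: "f1 \<in> borel_measurable borel" "f2 \<in> borel_measurable borel"
    unfolding f1_def f2_def by (intro borel_measurable_continuous_onI continuous_intros)+
  have f1L: "f1 \<in> measurable L borel" and f2L: "f2 \<in> measurable L borel" by (auto simp: mL)
  have pl1: "distr L borel f1 \<in> plans \<mu> \<mu> \<gamma>"
  proof -
    have "distr L borel fst = distr L borel (fst \<circ> f1)" 
      by (simp add: f1_def comp_def)
    moreover have "distr L borel (\<lambda>p. snd (snd p)) = distr L borel ((\<lambda>p. snd (snd p)) \<circ> f1)" 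
      by (simp add: f1_def comp_def)
    moreover have "distr L borel fst = distr L borel ((\<lambda>p. fst (snd p)) \<circ> f1)" 
      by (simp add: f1_def comp_def)
    ultimately show ?thesis unfolding plans_def using m1 m3 f1L pL
      by (simp add: distr_distr prob_space.prob_space_distr)
  qed
  have pl2: "distr L borel f2 \<in> plans \<mu> \<mu> \<gamma>"
  proof -
    have "distr L borel (\<lambda>p. fst (snd p)) = distr L borel (fst \<circ> f2)" 
      by (simp add: f2_def comp_def)
    moreover have "distr L borel (\<lambda>p. snd (snd p)) = distr L borel ((\<lambda>p. snd (snd p)) \<circ> f2)" 
      by (simp add: f2_def comp_def)
    moreover have "distr L borel (\<lambda>p. fst (snd p)) = distr L borel ((\<lambda>p. fst (snd p)) \<circ> f2)" 
      by (simp add: f2_def comp_def)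
    ultimately show ?thesis unfolding plans_def using m2 m3 f2L pL
      by (simp add: distr_distr prob_space.prob_space_distr)
  qed
  have c1: "(\<integral>\<^sup>+p. ennreal (cost3 p) \<partial>distr L borel f1) = (\<integral>\<^sup>+p. ennreal (2 * a p) \<partial>L)"
    by (subst nn_integral_distr) (use f1L in \<open>auto simp: cost3_def f1_def a_def intro!: nn_integral_cong\<close>)
  have c2: "(\<integral>\<^sup>+p. ennreal (cost3 p) \<partial>distr L borel f2) = (\<integral>\<^sup>+p. ennreal (2 * c p) \<partial>L)"
    by (subst nn_integral_distr) (use f2L in \<open>auto simp: cost3_def f2_def c_def intro!: nn_integral_cong\<close>)
  have aL[measurable]: "a \<in> borel_measurable L" and bL[measurable]: "B \<in> borel_measurable L"
    and cL[measurable]: "c \<in> borel_measurable L" by (auto simp: mL)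
  define b where "b = (\<integral>\<^sup>+p. ennreal (B p) \<partial>L)"
  define d where "d = (\<integral>\<^sup>+p. ennreal (a p + c p) \<partial>L)"
  have cL_eq: "(\<integral>\<^sup>+p. ennreal (cost3 p) \<partial>L) = b + d"
  proof -
    have "(\<integral>\<^sup>+p. ennreal (cost3 p) \<partial>L) = (\<integral>\<^sup>+p. ennreal (B p) + ennreal (a p + c p) \<partial>L)"
      unfolding cost by (intro nn_integral_cong) (simp add: B_def a_def c_def ennreal_plus)
    also have "\<dots> = b + d" unfolding b_def d_def by (rule nn_integral_add) auto
    finally show ?thesis .
  qed
  have sum12: "(\<integral>\<^sup>+p. ennreal (2 * a p) \<partial>L) + (\<integral>\<^sup>+p. ennreal (2 * c p) \<partial>L) = d + d"
  proof -
    have "(\<integral>\<^sup>+p. ennreal (2 * a p) \<partial>L) + (\<integral>\<^sup>+p. ennreal (2 * c p) \<partial>L)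
        = (\<integral>\<^sup>+p. ennreal (2 * a p) + ennreal (2 * c p) \<partial>L)"
      by (rule nn_integral_add[symmetric]) auto
    also have "\<dots> = (\<integral>\<^sup>+p. ennreal (a p + c p) + ennreal (a p + c p) \<partial>L)"
      by (intro nn_integral_cong) (simp add: a_def c_def ennreal_plus[symmetric] del: ennreal_plus)
    also have "\<dots> = d + d" unfolding d_def
      by (rule nn_integral_add) auto
    finally show ?thesis .
  qed
  have dfin: "d < \<infinity>"
  proof -
    have "d \<le> (\<integral>\<^sup>+p. ennreal (4 * (norm (snd (snd p)))\<^sup>2) + (ennreal (2 * (norm (fst p))\<^sup>2) + ennreal (2 * (norm (fst (snd p)))\<^sup>2)) \<partial>L)"
      unfolding d_def
    proof (intro nn_integral_mono)
      fix p :: "pt \<times> pt \<times> pt"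
      have "a p + c p \<le> 4 * (norm (snd (snd p)))\<^sup>2 + (2 * (norm (fst p))\<^sup>2 + 2 * (norm (fst (snd p)))\<^sup>2)"
        using sq_le[of "fst p" "snd (snd p)"] sq_le[of "fst (snd p)" "snd (snd p)"]
        unfolding a_def c_def by simp
      then show "ennreal (a p + c p) \<le> ennreal (4 * (norm (snd (snd p)))\<^sup>2) + (ennreal (2 * (norm (fst p))\<^sup>2) + ennreal (2 * (norm (fst (snd p)))\<^sup>2))"
        by (simp add: ennreal_plus[symmetric] del: ennreal_plus)
    qed
    also have "\<dots> = (\<integral>\<^sup>+p. ennreal (4 * (norm (snd (snd p)))\<^sup>2) \<partial>L) + ((\<integral>\<^sup>+p. ennreal (2 * (norm (fst p))\<^sup>2) \<partial>L) + (\<integral>\<^sup>+p. ennreal (2 * (norm (fst (snd p)))\<^sup>2) \<partial>L))"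
      by (simp add: mL nn_integral_add)
    also have "(\<integral>\<^sup>+p. ennreal (4 * (norm (snd (snd p)))\<^sup>2) \<partial>L) = 4 * (\<integral>\<^sup>+z. ennreal ((norm z)\<^sup>2) \<partial>\<gamma>)"
    proof -
      have "(\<integral>\<^sup>+p. ennreal (4 * (norm (snd (snd p)))\<^sup>2) \<partial>L) = (\<integral>\<^sup>+p. 4 * ennreal ((norm (snd (snd p)))\<^sup>2) \<partial>L)"
        by (simp add: ennreal_mult)
      also have "\<dots> = 4 * (\<integral>\<^sup>+p. ennreal ((norm (snd (snd p)))\<^sup>2) \<partial>L)"
        by (simp add: mL nn_integral_cmult)
      also have "(\<integral>\<^sup>+p. ennreal ((norm (snd (snd p)))\<^sup>2) \<partial>L) = (\<integral>\<^sup>+z. ennreal ((norm z)\<^sup>2) \<partial>\<gamma>)"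
        unfolding m3[symmetric] by (subst nn_integral_distr) (auto simp: mL)
      finally show ?thesis .
    qed
    also have "(\<integral>\<^sup>+p. ennreal (2 * (norm (fst p))\<^sup>2) \<partial>L) = 2 * (\<integral>\<^sup>+z. ennreal ((norm z)\<^sup>2) \<partial>\<mu>)"
    proof -
      have "(\<integral>\<^sup>+p. ennreal (2 * (norm (fst p))\<^sup>2) \<partial>L) = (\<integral>\<^sup>+p. 2 * ennreal ((norm (fst p))\<^sup>2) \<partial>L)"
        by (simp add: ennreal_mult)
      also have "\<dots> = 2 * (\<integral>\<^sup>+p. ennreal ((norm (fst p))\<^sup>2) \<partial>L)"
        by (simp add: mL nn_integral_cmult)
      also have "(\<integral>\<^sup>+p. ennreal ((norm (fst p))\<^sup>2) \<partial>L) = (\<integral>\<^sup>+z. ennreal ((norm z)\<^sup>2) \<partial>\<mu>)"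
        unfolding m1[symmetric] by (subst nn_integral_distr) (auto simp: mL)
      finally show ?thesis .
    qed
    also have "(\<integral>\<^sup>+p. ennreal (2 * (norm (fst (snd p)))\<^sup>2) \<partial>L) = 2 * (\<integral>\<^sup>+z. ennreal ((norm z)\<^sup>2) \<partial>\<mu>)"
    proof -
      have "(\<integral>\<^sup>+p. ennreal (2 * (norm (fst (snd p)))\<^sup>2) \<partial>L) = (\<integral>\<^sup>+p. 2 * ennreal ((norm (fst (snd p)))\<^sup>2) \<partial>L)"
        by (simp add: ennreal_mult)
      also have "\<dots> = 2 * (\<integral>\<^sup>+p. ennreal ((norm (fst (snd p)))\<^sup>2) \<partial>L)"
        by (simp add: mL nn_integral_cmult)
      also have "(\<integral>\<^sup>+p. ennreal ((norm (fst (snd p)))\<^sup>2) \<partial>L) = (\<integral>\<^sup>+z. ennreal ((norm z)\<^sup>2) \<partial>\<mu>)"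
        unfolding m2[symmetric] by (subst nn_integral_distr) (auto simp: mL)
      finally show ?thesis .
    qed
    finally show ?thesis
      by (rule le_less_trans) (use fmu fga in \<open>simp add: ennreal_mult_less_top\<close>)
  qed
  have "(b + d) + (b + d) \<le> d + d"
    using optL[OF pl1] optL[OF pl2] c1 c2 cL_eq sum12 add_mono by metis
  then have "b = 0" using dfin by (rule ennreal_cancel_aux)
  then have "AE p in L. ennreal (B p) = 0" unfolding b_def
    by (subst (asm) nn_integral_0_iff_AE) auto
  then show ?thesis
    by eventually_elim (simp add: B_def)
qed

theorem mainTheorem16:
  fixes h :: "real \<times> real \<Rightarrow> real" and \<alpha> :: "pt \<Rightarrow> real"
  defines "X \<equiv> {x::pt. snd (snd x) = 0}"
    and "Z \<equiv> sphere (0::pt) 1"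
    and "\<mu> \<equiv> distr (density lborel (\<lambda>p. ennreal (h p))) borel (\<lambda>(a, b). (a, b, 0::real))"
    and "\<gamma> \<equiv> density surfS2 (\<lambda>z. ennreal (\<alpha> z * indicator (sphere 0 1) z))"
  assumes h_meas: "h \<in> borel_measurable lborel"
    and h_nonneg: "\<forall>p. h p \<ge> 0"
    and h_int: "integrable lborel h"
    and \<mu>_prob: "prob_space \<mu>"
    and \<mu>_cpt: "compact (Spt \<mu>)"
    and \<alpha>_cont: "continuous_on Z \<alpha>"
    and \<alpha>_pos: "\<forall>z\<in>Z. \<alpha> z > 0"
    and \<alpha>_sym: "\<forall>z\<in>Z. \<alpha> (fst z, fst (snd z), - snd (snd z)) = \<alpha> z"
    and \<alpha>_norm: "(\<integral>\<^sup>+z. ennreal (\<alpha> z * indicator Z z) \<partial>surfS2) = 1"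
  shows "(\<forall>L. optimal_plan \<mu> \<mu> \<gamma> L \<longrightarrow> (\<forall>(x, y, z)\<in>Spt L. x = y)) \<and>
    (\<forall>T G. T \<in> borel_measurable borel \<and> G \<in> borel_measurable borel \<and>
        (\<forall>x\<in>X. T x \<in> X \<and> G x \<in> Z) \<and>
        optimal_plan \<mu> \<mu> \<gamma> (distr \<mu> borel (\<lambda>x. (x, T x, G x))) \<longrightarrow>
      (AE x in \<mu>. T x = x) \<and>
      optimal_plan \<mu> \<mu> \<gamma>
        (distr \<mu> borel (\<lambda>x. (x, x, (fst (G x), fst (snd (G x)), - snd (snd (G x)))))) \<and>
      (emeasure \<mu> {x\<in>X. snd (snd (G x)) \<noteq> 0} > 0 \<longrightarrow>
        distr \<mu> borel (\<lambda>x. (x, x, (fst (G x), fst (snd (G x)), - snd (snd (G x)))))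
          \<noteq> distr \<mu> borel (\<lambda>x. (x, T x, G x))))"
proof -
  have s\<mu>: "sets \<mu> = sets borel" unfolding \<mu>_def by simp
  note m\<mu> = measurable_cong_sets[OF s\<mu> refl]
  have sp\<mu>: "space \<mu> = UNIV" using sets_eq_imp_space_eq[OF s\<mu>] by simp
  interpret P: prob_space \<mu> by (rule \<mu>_prob)
  have fmu: "(\<integral>\<^sup>+x. ennreal ((norm x)\<^sup>2) \<partial>\<mu>) < \<infinity>"
  proof -
    have "bounded (Spt \<mu>)" using \<mu>_cpt compact_imp_bounded by blast
    then obtain R where R: "\<forall>x\<in>Spt \<mu>. norm x \<le> R" by (auto simp: bounded_iff)
    have "AE x in \<mu>. x \<notin> - Spt \<mu>" by (rule AE_not_in[OF Spt_null[OF s\<mu>]])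
    then have "AE x in \<mu>. ennreal ((norm x)\<^sup>2) \<le> ennreal (R\<^sup>2)"
      by eventually_elim (use R in \<open>auto intro!: ennreal_leI power_mono\<close>)
    then have "(\<integral>\<^sup>+x. ennreal ((norm x)\<^sup>2) \<partial>\<mu>) \<le> (\<integral>\<^sup>+x. ennreal (R\<^sup>2) \<partial>\<mu>)"
      by (rule nn_integral_mono_AE)
    also have "\<dots> = ennreal (R\<^sup>2)" using P.emeasure_space_1 by simp
    finally show ?thesis by (rule le_less_trans) simp
  qed
  define f\<alpha> where "f\<alpha> = (\<lambda>z::pt. \<alpha> z * indicator (sphere 0 1) z)"
  have f\<alpha>_meas[measurable]: "f\<alpha> \<in> borel_measurable borel"
  proof -
    have "(\<lambda>x. indicator (sphere (0::pt) 1) x *\<^sub>R \<alpha> x) \<in> borel_measurable borel"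
      by (rule borel_measurable_continuous_on_indicator) (use \<alpha>_cont in \<open>auto simp: Z_def\<close>)
    moreover have "(\<lambda>x. indicator (sphere (0::pt) 1) x *\<^sub>R \<alpha> x) = f\<alpha>"
      by (auto simp: f\<alpha>_def)
    ultimately show ?thesis by simp
  qed
  have sS: "sets surfS2 = sets borel" by (simp add: surfS2_def)
  note mS = measurable_cong_sets[OF sS refl]
  have \<gamma>_eq: "\<gamma> = density surfS2 (\<lambda>z. ennreal (f\<alpha> z))" by (simp add: \<gamma>_def f\<alpha>_def)
  have f\<alpha>S: "(\<lambda>z. ennreal (f\<alpha> z)) \<in> borel_measurable surfS2" by (simp add: mS)
  have fga: "(\<integral>\<^sup>+z. ennreal ((norm z)\<^sup>2) \<partial>\<gamma>) < \<infinity>"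
  proof -
    have "AE z in \<gamma>. z \<in> sphere 0 1"
      unfolding \<gamma>_eq AE_density[OF f\<alpha>S]
      by (rule AE_I2) (auto simp: f\<alpha>_def indicator_def split: if_split_asm)
    then have "(\<integral>\<^sup>+z. ennreal ((norm z)\<^sup>2) \<partial>\<gamma>) = (\<integral>\<^sup>+z. 1 \<partial>\<gamma>)"
      by (intro nn_integral_cong_AE) auto
    also have "\<dots> = emeasure \<gamma> (space \<gamma>)" by simp
    also have "\<dots> = (\<integral>\<^sup>+z. ennreal (f\<alpha> z) * indicator (space surfS2) z \<partial>surfS2)"
      unfolding \<gamma>_eq space_density by (rule emeasure_density[OF f\<alpha>S]) simp_all
    also have "\<dots> = 1" using \<alpha>_norm
      by (simp add: f\<alpha>_def Z_def)
    finally show ?thesis by simp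
  qed
  have \<gamma>_refl: "distr \<gamma> borel refl3 = \<gamma>"
    unfolding \<gamma>_eq
  proof (rule distr_density_inv[OF sS refl3_meas surfS2_refl])
    show "(\<lambda>z. ennreal (f\<alpha> z)) \<in> borel_measurable borel" by measurable
    fix z :: pt
    show "ennreal (f\<alpha> (refl3 z)) = ennreal (f\<alpha> z)"
    proof (cases "z \<in> sphere 0 1")
      case True
      then have "z \<in> Z" by (simp add: Z_def)
      with \<alpha>_sym have "\<alpha> (refl3 z) = \<alpha> z" by (simp add: refl3_def)
      then show ?thesis using True by (simp add: f\<alpha>_def)
    next
      case False
      then show ?thesis by (simp add: f\<alpha>_def)
    qed
  qed
  have partI: "\<forall>L. optimal_plan \<mu> \<mu> \<gamma> L \<longrightarrow> (\<forall>(x, y, z)\<in>Spt L. x = y)"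
  proof (intro allI impI)
    fix L assume opt: "optimal_plan \<mu> \<mu> \<gamma> L"
    have AE: "AE p in L. fst p = fst (snd p)" by (rule opt_diag[OF opt fmu fga])
    have sL: "sets L = sets borel" using opt unfolding optimal_plan_def plans_def by auto
    have spL: "space L = UNIV" using sets_eq_imp_space_eq[OF sL] by simp
    let ?U = "{p::pt\<times>pt\<times>pt. fst p \<noteq> fst (snd p)}"
    have oU: "open ?U" by (intro open_Collect_neq continuous_intros)
    have U0: "emeasure L ?U = 0"
      using AE_iff_measurable[of ?U L "\<lambda>p. fst p = fst (snd p)"] AE oU sL spL by auto
    have "\<forall>w\<in>Spt L. fst w = fst (snd w)"
    proof
      fix w assume w: "w \<in> Spt L"
      show "fst w = fst (snd w)"
      proof (rule ccontr)
        assume ne: "fst w \<noteq> fst (snd w)"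
        have "\<forall>U. open U \<and> w \<in> U \<longrightarrow> 0 < emeasure L U" using w by (simp add: Spt_def)
        then have "0 < emeasure L ?U" using oU ne by auto
        with U0 show False by simp
      qed
    qed
    then show "\<forall>(x, y, z)\<in>Spt L. x = y" by auto
  qed
  have partII: "\<forall>T G. T \<in> borel_measurable borel \<and> G \<in> borel_measurable borel \<and>
        (\<forall>x\<in>X. T x \<in> X \<and> G x \<in> Z) \<and>
        optimal_plan \<mu> \<mu> \<gamma> (distr \<mu> borel (\<lambda>x. (x, T x, G x))) \<longrightarrow>
      (AE x in \<mu>. T x = x) \<and>
      optimal_plan \<mu> \<mu> \<gamma>
        (distr \<mu> borel (\<lambda>x. (x, x, (fst (G x), fst (snd (G x)), - snd (snd (G x)))))) \<and>
      (emeasure \<mu> {x\<in>X. snd (snd (G x)) \<noteq> 0} > 0 \<longrightarrow>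
        distr \<mu> borel (\<lambda>x. (x, x, (fst (G x), fst (snd (G x)), - snd (snd (G x)))))
          \<noteq> distr \<mu> borel (\<lambda>x. (x, T x, G x)))"
  proof (intro allI impI)
    fix T G :: "pt \<Rightarrow> pt"
    assume asm: "T \<in> borel_measurable borel \<and> G \<in> borel_measurable borel \<and>
        (\<forall>x\<in>X. T x \<in> X \<and> G x \<in> Z) \<and>
        optimal_plan \<mu> \<mu> \<gamma> (distr \<mu> borel (\<lambda>x. (x, T x, G x)))"
    then have Tm[measurable]: "T \<in> borel_measurable borel" and Gm[measurable]: "G \<in> borel_measurable borel"
      by auto
    define F where "F = (\<lambda>x. (x, T x, G x))"
    define F' where "F' = (\<lambda>x. (x, x, refl3 (G x)))"
    have F'_eq: "(\<lambda>x. (x, x, (fst (G x), fst (snd (G x)), - snd (snd (G x))))) = F'"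
      by (simp add: F'_def refl3_def)
    have optP: "optimal_plan \<mu> \<mu> \<gamma> (distr \<mu> borel F)" using asm by (simp add: F_def)
    have Fb[measurable]: "F \<in> borel_measurable borel" unfolding F_def by measurable
    have F'b[measurable]: "F' \<in> borel_measurable borel" unfolding F'_def by measurable
    have FM: "F \<in> measurable \<mu> borel" and F'M: "F' \<in> measurable \<mu> borel"
      and GM: "G \<in> measurable \<mu> borel" by (simp_all add: m\<mu>)
    have c3[measurable]: "cost3 \<in> borel_measurable borel" unfolding cost3_def by measurable
    have AEd: "AE p in distr \<mu> borel F. fst p = fst (snd p)" by (rule opt_diag[OF optP fmu fga])
    have cl: "{p::pt\<times>pt\<times>pt. fst p = fst (snd p)} \<in> sets borel"
      by (intro borel_closed closed_Collect_eq continuous_intros)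
    have AE_T: "AE x in \<mu>. T x = x"
      using AEd AE_distr_iff[OF FM, of "\<lambda>p. fst p = fst (snd p)"] cl by (simp add: F_def eq_commute)
    have AE_X: "AE x in \<mu>. snd (snd x) = 0"
    proof -
      have clX: "{x::pt. snd (snd x) = 0} \<in> sets borel"
        by (intro borel_closed closed_Collect_eq continuous_intros)
      have em: "(\<lambda>(a, b). (a, b, 0::real)) \<in> measurable (density lborel (\<lambda>p. ennreal (h p))) borel"
        by (simp add: measurable_cong_sets[OF sets_density refl]) measurable
      show ?thesis unfolding \<mu>_def
        using AE_distr_iff[OF em, of "\<lambda>x. snd (snd x) = 0"] clX by (simp add: case_prod_beta)
    qed
    have gm: "distr \<mu> borel G = \<gamma>"
    proof -
      have "distr (distr \<mu> borel F) borel (\<lambda>p. snd (snd p)) = \<gamma>"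
        using optP unfolding optimal_plan_def plans_def by auto
      moreover have "distr (distr \<mu> borel F) borel (\<lambda>p. snd (snd p)) = distr \<mu> borel ((\<lambda>p. snd (snd p)) \<circ> F)"
        by (rule distr_distr) (simp_all add: FM)
      moreover have "(\<lambda>p. snd (snd p)) \<circ> F = G" by (simp add: F_def comp_def)
      ultimately show ?thesis by simp
    qed
    have plP': "distr \<mu> borel F' \<in> plans \<mu> \<mu> \<gamma>"
    proof -
      have d1: "distr (distr \<mu> borel F') borel fst = \<mu>"
        by (subst distr_distr) (simp_all add: F'M, simp add: F'_def comp_def distr_id2[OF s\<mu>[symmetric]])
      have d2: "distr (distr \<mu> borel F') borel (\<lambda>p. fst (snd p)) = \<mu>"
        by (subst distr_distr) (simp_all add: F'M, simp add: F'_def comp_def distr_id2[OF s\<mu>[symmetric]])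
      have "distr (distr \<mu> borel F') borel (\<lambda>p. snd (snd p)) = distr \<mu> borel (refl3 \<circ> G)"
        by (subst distr_distr) (simp_all add: F'M, simp add: F'_def comp_def)
      also have "\<dots> = distr (distr \<mu> borel G) borel refl3"
        by (rule distr_distr[symmetric]) (simp_all add: GM)
      also have "\<dots> = \<gamma>" using gm \<gamma>_refl by simp
      finally have d3: "distr (distr \<mu> borel F') borel (\<lambda>p. snd (snd p)) = \<gamma>" .
      show ?thesis unfolding plans_def using d1 d2 d3 F'M
        by (simp add: P.prob_space_distr)
    qed
    have costeq: "(\<integral>\<^sup>+p. ennreal (cost3 p) \<partial>distr \<mu> borel F') = (\<integral>\<^sup>+p. ennreal (cost3 p) \<partial>distr \<mu> borel F)"
    proof -
      have "(\<integral>\<^sup>+p. ennreal (cost3 p) \<partial>distr \<mu> borel F') = (\<integral>\<^sup>+x. ennreal (cost3 (F' x)) \<partial>\<mu>)"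
        by (rule nn_integral_distr) (simp_all add: F'M)
      also have "\<dots> = (\<integral>\<^sup>+x. ennreal (cost3 (F x)) \<partial>\<mu>)"
      proof (rule nn_integral_cong_AE)
        show "AE x in \<mu>. ennreal (cost3 (F' x)) = ennreal (cost3 (F x))"
          using AE_T AE_X
        proof eventually_elim
          case (elim x)
          then show ?case
            by (simp add: F_def F'_def cost3_def norm_refl3_diff)
        qed
      qed
      also have "\<dots> = (\<integral>\<^sup>+p. ennreal (cost3 p) \<partial>distr \<mu> borel F)"
        by (rule nn_integral_distr[symmetric]) (simp_all add: FM)
      finally show ?thesis .
    qed
    have optP': "optimal_plan \<mu> \<mu> \<gamma> (distr \<mu> borel F')"
      using plP' optP costeq unfolding optimal_plan_def by simp
    have partIII: "distr \<mu> borel F' \<noteq> distr \<mu> borel F"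
      if pos: "emeasure \<mu> {x\<in>X. snd (snd (G x)) \<noteq> 0} > 0"
    proof
      assume eq: "distr \<mu> borel F' = distr \<mu> borel F"
      define S where "S = {p::pt\<times>pt\<times>pt. norm (snd (snd p) - G (fst p)) \<noteq> 0}"
      have Sm: "S \<in> sets borel"
      proof -
        have "(\<lambda>p::pt\<times>pt\<times>pt. norm (snd (snd p) - G (fst p))) \<in> borel_measurable borel" by measurable
        from measurable_sets[OF this, of "- {0}"] show ?thesis by (simp add: S_def vimage_def)
      qed
      have "emeasure (distr \<mu> borel F) S = emeasure \<mu> (F -` S \<inter> space \<mu>)"
        by (rule emeasure_distr[OF FM Sm])
      also have "F -` S \<inter> space \<mu> = {}" by (auto simp: F_def S_def)
      finally have e0: "emeasure (distr \<mu> borel F) S = 0" by simp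
      have "emeasure (distr \<mu> borel F') S = emeasure \<mu> (F' -` S \<inter> space \<mu>)"
        by (rule emeasure_distr[OF F'M Sm])
      also have "\<dots> \<ge> emeasure \<mu> {x\<in>X. snd (snd (G x)) \<noteq> 0}"
      proof (rule emeasure_mono)
        show "{x \<in> X. snd (snd (G x)) \<noteq> 0} \<subseteq> F' -` S \<inter> space \<mu>"
          by (auto simp: F'_def S_def refl3_def sp\<mu> prod_eq_iff)
        show "F' -` S \<inter> space \<mu> \<in> sets \<mu>" by (rule measurable_sets[OF F'M Sm])
      qed
      finally have "emeasure (distr \<mu> borel F') S > 0" using pos by (simp add: less_le_trans)
      with e0 eq show False by simp
    qed
    show "(AE x in \<mu>. T x = x) \<and>
      optimal_plan \<mu> \<mu> \<gamma>
        (distr \<mu> borel (\<lambda>x. (x, x, (fst (G x), fst (snd (G x)), - snd (snd (G x)))))) \<and>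
      (emeasure \<mu> {x\<in>X. snd (snd (G x)) \<noteq> 0} > 0 \<longrightarrow>
        distr \<mu> borel (\<lambda>x. (x, x, (fst (G x), fst (snd (G x)), - snd (snd (G x)))))
          \<noteq> distr \<mu> borel (\<lambda>x. (x, T x, G x)))"
      unfolding F'_eq using AE_T optP' partIII by (simp add: F_def)
  qed
  from partI partII show ?thesis by blast
qed

end
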